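(* Assume that (A1) $\mu_k\sim 1/k^2$, (A2) $\nabla L$ is $M$-Lipschitz, i.e. $\|\nabla L(x)-\nabla L(y)\|\le M\|x-y\|$ for all $x,y\in\mathcal H$, and that either (i) $\lambda>M\mu_0$, or (ii) there is $B>0$ with $\|\nabla L(x)\|\le B$ for all $x\in\mathcal H$. Then there exist constants $m,c>0$ such that $$\forall x\in\mathcal H,\qquad \langle Ax-\nabla L(x),x\rangle\le -m\|x\|^2+c .$$
   Context: Let $\mathcal H$ be a separable real Hilbert space with inner product $\langle\cdot,\cdot\rangle$, norm $\|\cdot\|$, and orthonormal basis $(f_k)_{k\ge0}$, and let $\mu_0\ge\mu_1\ge\cdots>0$ (the eigenvalues of the integral operator of a kernel $K$, with eigenfunctions $f_k$). The RKHS is $\mathcal H_K=\{\sum_k\alpha_kf_k:\sum_k\alpha_k^2/\mu_k<\infty\}$ with $\|\sum_k\alpha_kf_k\|_{\mathcal H_K}^2=\sum_k\alpha_k^2/\mu_k$. Fix $\lambda>0$ and let $A$ be the unbounded diagonal operator $Af_k=-(\lambda/\mu_k)f_k$ (i.e. $A=-\frac\lambda2\nabla\|\cdot\|_{\mathcal H_K}^2$), with the inequality understood for $x$ in its domain. $L:\mathcal H\to\mathbb R$ is Fréchet differentiable with gradient $\nabla L$ (Riesz representer of the Fréchet derivative) and admits a global minimizer $x^*$. *)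

theory Defs
  imports "HOL-Analysis.Analysis" "HOL-Library.Landau_Symbols"
begin

definition orthonormal_basis :: "(nat \<Rightarrow> 'a::{real_inner,complete_space}) \<Rightarrow> bool" where
  "orthonormal_basis f \<longleftrightarrow>
     (\<forall>i j. f i \<bullet> f j = (if i = j then 1 else 0)) \<and>
     (\<forall>x. (\<lambda>k. (x \<bullet> f k) *\<^sub>R f k) sums x)"

definition A_dom :: "(nat \<Rightarrow> 'a::{real_inner,complete_space}) \<Rightarrow> (nat \<Rightarrow> real) \<Rightarrow> 'a \<Rightarrow> bool" where
  "A_dom f \<mu> x \<longleftrightarrow> summable (\<lambda>k. ((x \<bullet> f k) / \<mu> k)\<^sup>2)"

definition A_op :: "real \<Rightarrow> (nat \<Rightarrow> 'a::{real_inner,complete_space}) \<Rightarrow> (nat \<Rightarrow> real) \<Rightarrow> 'a \<Rightarrow> 'a" where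
  "A_op lam f \<mu> x = (\<Sum>k. (- (lam / \<mu> k) * (x \<bullet> f k)) *\<^sub>R f k)"

end

theory Submission
  imports Defs
begin

lemma onb_norm_sum:
  fixes f :: "nat \<Rightarrow> 'a::{real_inner,complete_space}"
  assumes on: "\<forall>i j. f i \<bullet> f j = (if i = j then 1 else 0)" and fin: "finite S"
  shows "(norm (\<Sum>k\<in>S. c k *\<^sub>R f k))\<^sup>2 = (\<Sum>k\<in>S. (c k)\<^sup>2)"
proof -
  have "(norm (\<Sum>k\<in>S. c k *\<^sub>R f k))\<^sup>2 = (\<Sum>k\<in>S. c k *\<^sub>R f k) \<bullet> (\<Sum>k\<in>S. c k *\<^sub>R f k)"
    by (simp add: power2_norm_eq_inner)
  also have "\<dots> = (\<Sum>i\<in>S. (c i)\<^sup>2)"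
  proof -
    have fij: "\<And>i j. f i \<bullet> f j = (if i = j then 1 else 0)" using on by blast
    show ?thesis using fin by (simp add: inner_sum_left inner_sum_right fij if_distrib power2_eq_square cong: if_cong)
  qed
  finally show ?thesis .
qed

lemma A_bound:
  fixes f :: "nat \<Rightarrow> 'a::{real_inner,complete_space}"
  assumes onb: "orthonormal_basis f"
    and mu_pos: "\<And>k. \<mu> k > 0"
    and mu_mono: "antimono \<mu>"
    and lam_pos: "lam > 0"
    and dom: "A_dom f \<mu> x"
  shows "A_op lam f \<mu> x \<bullet> x \<le> - (lam / \<mu> 0) * (norm x)\<^sup>2"
proof -
  define a where "a k = x \<bullet> f k" for k
  define c where "c k = - (lam / \<mu> k) * a k" for k
  have on: "\<forall>i j. f i \<bullet> f j = (if i = j then 1 else 0)" and sx: "(\<lambda>k. a k *\<^sub>R f k) sums x"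
    using onb unfolding orthonormal_basis_def a_def by auto
  have "(\<lambda>k. (a k *\<^sub>R f k) \<bullet> x) sums (x \<bullet> x)"
    using bounded_linear.sums[OF bounded_linear_inner_left sx] .
  hence "(\<lambda>k. (a k)\<^sup>2) sums (x \<bullet> x)"
    by (simp add: a_def inner_commute power2_eq_square)
  hence pars: "(\<lambda>k. (a k)\<^sup>2) sums ((norm x)\<^sup>2)"
    by (simp only: power2_norm_eq_inner)
  have sa: "summable (\<lambda>k. (a k / \<mu> k)\<^sup>2)" using dom unfolding A_dom_def a_def .
  have sc: "summable (\<lambda>k. (c k)\<^sup>2)"
  proof -
    have "summable (\<lambda>k. lam\<^sup>2 * (a k / \<mu> k)\<^sup>2)" using summable_mult[OF sa] .
    moreover have "(c k)\<^sup>2 = lam\<^sup>2 * (a k / \<mu> k)\<^sup>2" for k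
      by (simp add: c_def power2_eq_square field_simps)
    ultimately show ?thesis by simp
  qed
  have tail: "\<exists>N. \<forall>m\<ge>N. \<forall>n. norm (sum (\<lambda>k. c k *\<^sub>R f k) {m..<n}) < e" if e: "e > 0" for e
  proof -
    from e have "e\<^sup>2 > 0" by simp
    then obtain N where N: "\<And>m n. m \<ge> N \<Longrightarrow> norm (sum (\<lambda>k. (c k)\<^sup>2) {m..<n}) < e\<^sup>2"
      using sc unfolding summable_Cauchy by blast
    show "\<exists>N. \<forall>m\<ge>N. \<forall>n. norm (sum (\<lambda>k. c k *\<^sub>R f k) {m..<n}) < e"
    proof (intro exI allI impI)
      fix m n assume "m \<ge> N"
      hence "(norm (sum (\<lambda>k. c k *\<^sub>R f k) {m..<n}))\<^sup>2 < e\<^sup>2"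
        using onb_norm_sum[OF on, of "{m..<n}" c] N[of m n] by (simp add: sum_nonneg)
      thus "norm (sum (\<lambda>k. c k *\<^sub>R f k) {m..<n}) < e"
        using e by (smt (verit) norm_ge_zero power_mono)
    qed
  qed
  have diff: "(\<Sum>k<n. g k) - (\<Sum>k<m. g k) = sum g {m..<n}" if "m \<le> n" for m n and g :: "nat \<Rightarrow> 'a"
    using sum_diff_nat_ivl[of 0 m n g] that by (simp add: lessThan_atLeast0)
  have sv: "summable (\<lambda>k. c k *\<^sub>R f k)"
    unfolding summable_iff_convergent Cauchy_convergent_iff[symmetric]
  proof (rule CauchyI)
    fix e :: real assume "e > 0"
    then obtain N where N: "\<And>m n. m \<ge> N \<Longrightarrow> norm (sum (\<lambda>k. c k *\<^sub>R f k) {m..<n}) < e"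
      using tail by blast
    show "\<exists>M. \<forall>m\<ge>M. \<forall>n\<ge>M. norm ((\<Sum>k<m. c k *\<^sub>R f k) - (\<Sum>k<n. c k *\<^sub>R f k)) < e"
    proof (intro exI allI impI)
      fix m n assume mn: "m \<ge> N" "n \<ge> N"
      show "norm ((\<Sum>k<m. c k *\<^sub>R f k) - (\<Sum>k<n. c k *\<^sub>R f k)) < e"
      proof (cases "n \<le> m")
        case True thus ?thesis using diff[OF True] N[OF mn(2)] by simp
      next
        case False
        hence mn2: "m \<le> n" by simp
        show ?thesis using diff[OF mn2, of "\<lambda>k. c k *\<^sub>R f k"] N[OF mn(1), of n] by (metis norm_minus_commute)
      qed
    qed
  qed
  have "(\<lambda>k. c k *\<^sub>R f k) sums A_op lam f \<mu> x"
    using sv unfolding A_op_def c_def a_def by (simp add: summable_sums)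
  hence s1: "(\<lambda>k. (c k *\<^sub>R f k) \<bullet> x) sums (A_op lam f \<mu> x \<bullet> x)"
    using bounded_linear.sums[OF bounded_linear_inner_left] by blast
  have s2: "(\<lambda>k. - (lam / \<mu> 0) * (a k)\<^sup>2) sums (- (lam / \<mu> 0) * (norm x)\<^sup>2)"
    using sums_mult[OF pars, of "- (lam / \<mu> 0)"] by simp
  have le: "(c k *\<^sub>R f k) \<bullet> x \<le> - (lam / \<mu> 0) * (a k)\<^sup>2" for k
  proof -
    have "(c k *\<^sub>R f k) \<bullet> x = - (lam / \<mu> k) * (a k)\<^sup>2"
      by (simp add: c_def a_def inner_commute power2_eq_square)
    moreover have "lam / \<mu> 0 \<le> lam / \<mu> k"
      using mu_mono mu_pos lam_pos unfolding antimono_def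
      by (intro divide_left_mono) (auto simp: mult_pos_pos)
    ultimately show ?thesis
      using mult_right_mono[of "lam / \<mu> 0" "lam / \<mu> k" "(a k)\<^sup>2"] by simp
  qed
  show ?thesis using sums_le[OF _ s1 s2] le by blast
qed

lemma quad_bound:
  fixes a b t :: real
  assumes "a > 0"
  shows "- a * t\<^sup>2 + b * t \<le> - (a/2) * t\<^sup>2 + b\<^sup>2 / (2*a)"
proof -
  have "0 \<le> (a/2) * (t - b/a)\<^sup>2" using assms by simp
  also have "(a/2) * (t - b/a)\<^sup>2 = (a/2) * t\<^sup>2 - b * t + b\<^sup>2/(2*a)"
    using assms by (simp add: power2_eq_square field_simps)
  finally show ?thesis by simp
qed

theorem proposition1:
  fixes f :: "nat \<Rightarrow> 'a::{real_inner,complete_space}"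
    and \<mu> :: "nat \<Rightarrow> real" and lam M :: real
    and L :: "'a \<Rightarrow> real" and gradL :: "'a \<Rightarrow> 'a"
  assumes onb: "orthonormal_basis f"
    and mu_pos: "\<And>k. \<mu> k > 0"
    and mu_mono: "antimono \<mu>"
    and lam_pos: "lam > 0"
    and L_deriv: "\<And>x. (L has_derivative (\<lambda>h. gradL x \<bullet> h)) (at x)"
    and L_min: "\<exists>xs. \<forall>x. L xs \<le> L x"
    and A1: "\<mu> \<in> \<Theta>(\<lambda>k. 1 / (real k)\<^sup>2)"
    and A2: "\<And>x y. norm (gradL x - gradL y) \<le> M * norm (x - y)"
    and cases: "lam > M * \<mu> 0 \<or> (\<exists>B>0. \<forall>x. norm (gradL x) \<le> B)"
  shows "\<exists>m>0. \<exists>c>0. \<forall>x. A_dom f \<mu> x \<longrightarrow>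
           (A_op lam f \<mu> x - gradL x) \<bullet> x \<le> - m * (norm x)\<^sup>2 + c"
proof -
  have mu0: "\<mu> 0 > 0" using mu_pos by simp
  have gen: "\<exists>m>0. \<exists>c>0. \<forall>x. A_dom f \<mu> x \<longrightarrow>
           (A_op lam f \<mu> x - gradL x) \<bullet> x \<le> - m * (norm x)\<^sup>2 + c"
    if d: "d > 0" and gb: "\<And>x. - (gradL x \<bullet> x) \<le> (lam / \<mu> 0 - d) * (norm x)\<^sup>2 + G * norm x"
    for d G
  proof (intro exI conjI allI impI)
    show "d/2 > 0" using d by simp
    show "G\<^sup>2/(2*d) + 1 > 0" using d by (simp add: add_nonneg_pos)
    fix x assume "A_dom f \<mu> x"
    hence Ax: "A_op lam f \<mu> x \<bullet> x \<le> - (lam / \<mu> 0) * (norm x)\<^sup>2"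
      using A_bound[OF onb mu_pos mu_mono lam_pos] by blast
    have "(A_op lam f \<mu> x - gradL x) \<bullet> x = A_op lam f \<mu> x \<bullet> x - gradL x \<bullet> x"
      by (simp add: inner_diff_left)
    also have "\<dots> \<le> - d * (norm x)\<^sup>2 + G * norm x"
      using Ax gb[of x] by (simp add: algebra_simps)
    also have "\<dots> \<le> - (d/2) * (norm x)\<^sup>2 + G\<^sup>2/(2*d)"
      using quad_bound[OF d] .
    finally show "(A_op lam f \<mu> x - gradL x) \<bullet> x \<le> - (d/2) * (norm x)\<^sup>2 + (G\<^sup>2/(2*d) + 1)"
      by simp
  qed
  from cases show ?thesis
  proof
    assume h: "lam > M * \<mu> 0"
    show ?thesis
    proof (rule gen[of "lam / \<mu> 0 - M" "norm (gradL 0)"])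
      show "lam / \<mu> 0 - M > 0" using h mu0 by (simp add: field_simps)
      fix x
      have "\<bar>(gradL x - gradL 0) \<bullet> x\<bar> \<le> norm (gradL x - gradL 0) * norm x"
        by (rule Cauchy_Schwarz_ineq2)
      also have "\<dots> \<le> M * norm x * norm x"
        using A2[of x 0] by (simp add: mult_right_mono)
      finally have 1: "\<bar>(gradL x - gradL 0) \<bullet> x\<bar> \<le> M * (norm x)\<^sup>2"
        by (simp add: power2_eq_square mult.assoc)
      have 2: "\<bar>gradL 0 \<bullet> x\<bar> \<le> norm (gradL 0) * norm x"
        by (rule Cauchy_Schwarz_ineq2)
      have "gradL x \<bullet> x = (gradL x - gradL 0) \<bullet> x + gradL 0 \<bullet> x"
        by (simp add: inner_diff_left)
      thus "- (gradL x \<bullet> x) \<le> (lam / \<mu> 0 - (lam / \<mu> 0 - M)) * (norm x)\<^sup>2 + norm (gradL 0) * norm x"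
        using 1 2 by (simp add: algebra_simps)
    qed
  next
    assume "\<exists>B>0. \<forall>x. norm (gradL x) \<le> B"
    then obtain B where B: "\<And>x. norm (gradL x) \<le> B" by blast
    show ?thesis
    proof (rule gen[of "lam / \<mu> 0" B])
      show "lam / \<mu> 0 > 0" using lam_pos mu0 by simp
      fix x
      have "\<bar>gradL x \<bullet> x\<bar> \<le> norm (gradL x) * norm x"
        by (rule Cauchy_Schwarz_ineq2)
      also have "\<dots> \<le> B * norm x" using B[of x] by (simp add: mult_right_mono)
      finally show "- (gradL x \<bullet> x) \<le> (lam / \<mu> 0 - lam / \<mu> 0) * (norm x)\<^sup>2 + B * norm x"
        by simp
    qed
  qed
qed

end
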